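(* Let $D$ be a digraph with $n$ vertices which contains a directed cycle, let $g$ be its girth, and let $t$ be the number of induced directed cycles of $D$. If $tg\geq n$, then $$\alpha(D)\geq\frac{g-1}{g}\left(\frac{n^g}{tg}\right)^{\frac{1}{g-1}}.$$
   Context: All digraphs are finite, loopless and strict (at most one edge from $u$ to $v$ for distinct $u,v$). The girth of a digraph is the length of its shortest directed cycle. An induced directed cycle is a directed cycle $C$ such that the induced subdigraph on $V(C)$ is exactly $C$. A subset $S\subseteq V(D)$ is acyclic if $D[S]$ contains no directed cycle; $\alpha(D)$ is the maximum size of an acyclic subset of $V(D)$. *)

theory Defs
  imports Complex_Main
begin

definition digraph :: "'a set \<Rightarrow> ('a \<times> 'a) set \<Rightarrow> bool" where
  "digraph V E \<longleftrightarrow> finite V \<and> E \<subseteq> V \<times> V \<and> (\<forall>v. (v, v) \<notin> E)"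

definition is_dcycle :: "('a \<times> 'a) set \<Rightarrow> 'a list \<Rightarrow> bool" where
  "is_dcycle E cs \<longleftrightarrow> length cs \<ge> 2 \<and> distinct cs \<and>
     (\<forall>i < length cs. (cs ! i, cs ! ((i + 1) mod length cs)) \<in> E)"

definition cycle_edges :: "'a list \<Rightarrow> ('a \<times> 'a) set" where
  "cycle_edges cs = {(cs ! i, cs ! ((i + 1) mod length cs)) | i. i < length cs}"

definition is_induced_dcycle :: "('a \<times> 'a) set \<Rightarrow> 'a list \<Rightarrow> bool" where
  "is_induced_dcycle E cs \<longleftrightarrow> is_dcycle E cs \<and>
     E \<inter> (set cs \<times> set cs) = cycle_edges cs"

text \<open>The number of induced directed cycles, counted as subdigraphs
  (a cycle and its rotations are the same subdigraph).\<close>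

definition num_induced_dcycles :: "('a \<times> 'a) set \<Rightarrow> nat" where
  "num_induced_dcycles E = card {(set cs, cycle_edges cs) | cs. is_induced_dcycle E cs}"

definition has_dcycle :: "('a \<times> 'a) set \<Rightarrow> bool" where
  "has_dcycle E \<longleftrightarrow> (\<exists>cs. is_dcycle E cs)"

definition girth :: "('a \<times> 'a) set \<Rightarrow> nat" where
  "girth E = (LEAST k. \<exists>cs. is_dcycle E cs \<and> length cs = k)"

definition acyclic_set :: "('a \<times> 'a) set \<Rightarrow> 'a set \<Rightarrow> bool" where
  "acyclic_set E S \<longleftrightarrow> \<not> (\<exists>cs. is_dcycle E cs \<and> set cs \<subseteq> S)"

definition alpha_acyclic :: "'a set \<Rightarrow> ('a \<times> 'a) set \<Rightarrow> nat" where
  "alpha_acyclic V E = Max {card S | S. S \<subseteq> V \<and> acyclic_set E S}"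

end

theory Submission
  imports Defs
begin


lemma rotate_dcycle:
  assumes "is_dcycle E cs" shows "is_dcycle E (rotate j cs)"
proof -
  let ?L = "length cs"
  have L: "?L \<ge> 2" "distinct cs" "\<forall>i<?L. (cs ! i, cs ! ((i + 1) mod ?L)) \<in> E"
    using assms by (auto simp: is_dcycle_def)
  have "(rotate j cs ! k, rotate j cs ! ((k+1) mod ?L)) \<in> E" if k: "k < ?L" for k
  proof -
    have "rotate j cs ! k = cs ! ((j+k) mod ?L)" using k by (simp add: nth_rotate)
    moreover have "rotate j cs ! ((k+1) mod ?L) = cs ! ((j + (k+1) mod ?L) mod ?L)"
      using k L by (subst nth_rotate) (auto intro: mod_less_divisor)
    moreover have "(j + (k+1) mod ?L) mod ?L = ((j+k) mod ?L + 1) mod ?L"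
      by (simp add: mod_simps)
    moreover have "(j+k) mod ?L < ?L" using L(1) by (intro mod_less_divisor) linarith
    ultimately show ?thesis using L(3) by simp
  qed
  then show ?thesis using L by (simp add: is_dcycle_def)
qed

lemma shorter_cycle:
  assumes c: "is_dcycle E cs" and ni: "\<not> is_induced_dcycle E cs"
    and loop: "\<forall>v. (v,v) \<notin> E"
  shows "\<exists>cs'. is_dcycle E cs' \<and> set cs' \<subseteq> set cs \<and> length cs' < length cs"
proof -
  let ?L = "length cs"
  have L: "?L \<ge> 2" "distinct cs" "\<forall>i<?L. (cs ! i, cs ! ((i + 1) mod ?L)) \<in> E"
    using c by (auto simp: is_dcycle_def)
  have sub: "cycle_edges cs \<subseteq> E \<inter> (set cs \<times> set cs)"
    using L by (auto simp: cycle_edges_def intro!: nth_mem mod_less_divisor)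
  then obtain a b where ab: "(a,b) \<in> E" "a \<in> set cs" "b \<in> set cs" "(a,b) \<notin> cycle_edges cs"
    using ni c unfolding is_induced_dcycle_def by blast
  obtain j where j: "j < ?L" "b = cs ! j" using ab(3) by (metis in_set_conv_nth)
  define ds where "ds = rotate j cs"
  have dc: "is_dcycle E ds" using rotate_dcycle[OF c] ds_def by simp
  have lds: "length ds = ?L" "set ds = set cs" "distinct ds" using L by (auto simp: ds_def)
  have d0: "ds ! 0 = b" using j L by (subst ds_def, subst nth_rotate) auto
  obtain m where m: "m < ?L" "a = ds ! m" using ab(2) lds by (metis in_set_conv_nth)
  have m0: "m \<noteq> 0" using m d0 ab(1) loop by metis
  have mL: "m \<noteq> ?L - 1"
  proof
    assume mm: "m = ?L - 1"
    define i where "i = (j + (?L - 1)) mod ?L"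
    have "a = cs ! i" using m mm L by (simp add: ds_def nth_rotate i_def)
    moreover have "(i + 1) mod ?L = j"
    proof -
      have "(i + 1) mod ?L = (j + (?L - 1) + 1) mod ?L" unfolding i_def by (simp add: mod_simps)
      also have "j + (?L - 1) + 1 = j + ?L" using L(1) by simp
      finally show ?thesis using j by simp
    qed
    moreover have "i < ?L" using L(1) unfolding i_def by (intro mod_less_divisor) linarith
    ultimately have "(a,b) \<in> cycle_edges cs" using j unfolding cycle_edges_def by blast
    with ab(4) show False by simp
  qed
  define cs' where "cs' = take (m+1) ds"
  have len: "length cs' = m + 1" using m lds by (simp add: cs'_def)
  have "is_dcycle E cs'"
    unfolding is_dcycle_def
  proof (intro conjI allI impI)
    show "2 \<le> length cs'" using len m0 by simp
    show "distinct cs'" using lds by (simp add: cs'_def)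
    fix k assume k: "k < length cs'"
    show "(cs' ! k, cs' ! ((k + 1) mod length cs')) \<in> E"
    proof (cases "k = m")
      case True
      then show ?thesis using len ab(1) m d0 by (simp add: cs'_def)
    next
      case False
      then have "k < m" using k len by simp
      have kL: "k < length ds" using \<open>k<m\<close> m lds by simp
      have "(ds ! k, ds ! ((k + 1) mod length ds)) \<in> E" using dc kL unfolding is_dcycle_def by blast
      then have "(ds ! k, ds ! ((k + 1) mod ?L)) \<in> E" using lds by simp
      moreover have "(k+1) mod ?L = k + 1" using \<open>k<m\<close> m by simp
      ultimately show ?thesis using \<open>k<m\<close> len by (simp add: cs'_def)
    qed
  qed
  moreover have "set cs' \<subseteq> set cs" using lds by (auto simp: cs'_def dest: in_set_takeD)
  moreover have "length cs' < ?L" using len mL m by simp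
  ultimately show ?thesis by blast
qed

lemma induced_sub:
  assumes "is_dcycle E cs" and loop: "\<forall>v. (v,v) \<notin> E"
  shows "\<exists>cs'. is_induced_dcycle E cs' \<and> set cs' \<subseteq> set cs"
  using assms(1)
proof (induction "length cs" arbitrary: cs rule: less_induct)
  case less
  show ?case
  proof (cases "is_induced_dcycle E cs")
    case True then show ?thesis by blast
  next
    case False
    then obtain cs' where "is_dcycle E cs'" "set cs' \<subseteq> set cs" "length cs' < length cs"
      using shorter_cycle[OF less.prems False loop] by blast
    with less.hyps show ?thesis by blast
  qed
qed



lemma weight_sub:
  fixes p :: real
  assumes fin: "finite A" and XA: "X \<subseteq> A"
  shows "(\<Sum>S\<in>Pow A. p ^ card S * (1-p) ^ card (A - S) * (if X \<subseteq> S then 1 else 0)) = p ^ card X"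
proof -
  have eq: "p ^ card S * (1-p) ^ card (A - S) * (if X \<subseteq> S then 1 else 0)
      = (\<Prod>a\<in>S. p) * (\<Prod>a\<in>A-S. if a \<in> X then 0 else 1-p)" if S: "S \<in> Pow A" for S
  proof (cases "X \<subseteq> S")
    case True
    then have "(\<Prod>a\<in>A-S. if a \<in> X then 0 else 1-p) = (\<Prod>a\<in>A-S. 1-p)"
      by (intro prod.cong) auto
    then show ?thesis using True by simp
  next
    case False
    then obtain a where "a \<in> X" "a \<notin> S" by blast
    then have "a \<in> A - S" using XA by blast
    then have "(\<Prod>a\<in>A-S. if a \<in> X then 0 else 1-p) = 0"
      using fin \<open>a \<in> X\<close> by (subst prod_zero_iff) auto
    then show ?thesis using False by simp
  qed
  have "(\<Sum>S\<in>Pow A. p ^ card S * (1-p) ^ card (A - S) * (if X \<subseteq> S then 1 else 0))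
      = (\<Sum>S\<in>Pow A. (\<Prod>a\<in>S. p) * (\<Prod>a\<in>A-S. if a \<in> X then 0 else 1-p))"
    using eq by (rule sum.cong[OF refl])
  also have "\<dots> = (\<Prod>a\<in>A. p + (if a \<in> X then 0 else 1-p))"
    by (rule prod_add[OF fin, symmetric])
  also have "\<dots> = (\<Prod>a\<in>A. if a \<in> X then p else 1)"
    by (intro prod.cong) auto
  also have "\<dots> = p ^ card (A \<inter> X)"
    using fin by (simp add: prod.If_cases)
  also have "A \<inter> X = X" using XA by blast
  finally show ?thesis .
qed

lemma average_exists:
  fixes p :: real
  assumes fin: "finite V" and F: "F \<subseteq> Pow V" and p: "0 \<le> p" "p \<le> 1"
  shows "\<exists>S\<subseteq>V. real (card S) - real (card {X\<in>F. X \<subseteq> S}) \<ge>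
            real (card V) * p - (\<Sum>X\<in>F. p ^ card X)"
proof -
  have finF: "finite F" using F fin by (meson finite_Pow_iff finite_subset)
  define w where "w S = p ^ card S * (1-p) ^ card (V - S)" for S
  define f where "f S = real (card S) - real (card {X\<in>F. X \<subseteq> S})" for S
  have w0: "w S \<ge> 0" for S using p by (simp add: w_def)
  have w1: "(\<Sum>S\<in>Pow V. w S) = 1"
    using weight_sub[OF fin, of "{}" p] by (simp add: w_def)
  have cardS: "real (card S) = (\<Sum>v\<in>V. if {v} \<subseteq> S then 1 else 0)" if "S \<subseteq> V" for S
  proof -
    have "{v\<in>V. v \<in> S} = S" using that by blast
    then have "real (card S) = real (card {v\<in>V. v \<in> S})" by simp
    also have "\<dots> = (\<Sum>v\<in>V. if v \<in> S then 1 else 0)"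
      using fin by (simp add: sum.If_cases Int_def)
    finally show ?thesis by simp
  qed
  have cardF: "real (card {X\<in>F. X \<subseteq> S}) = (\<Sum>X\<in>F. if X \<subseteq> S then 1 else 0)" for S
    using finF by (simp add: sum.If_cases Int_def)
  have E: "(\<Sum>S\<in>Pow V. w S * f S) = real (card V) * p - (\<Sum>X\<in>F. p ^ card X)"
  proof -
    have "(\<Sum>S\<in>Pow V. w S * f S) = (\<Sum>S\<in>Pow V. (\<Sum>v\<in>V. w S * (if {v} \<subseteq> S then 1 else 0)))
        - (\<Sum>S\<in>Pow V. (\<Sum>X\<in>F. w S * (if X \<subseteq> S then 1 else 0)))"
      unfolding f_def by (simp add: cardS cardF right_diff_distrib sum_subtractf sum_distrib_left)
    also have "\<dots> = (\<Sum>v\<in>V. (\<Sum>S\<in>Pow V. w S * (if {v} \<subseteq> S then 1 else 0)))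
        - (\<Sum>X\<in>F. (\<Sum>S\<in>Pow V. w S * (if X \<subseteq> S then 1 else 0)))"
      by (simp add: sum.swap[of _ "Pow V"])
    also have "\<dots> = (\<Sum>v\<in>V. p) - (\<Sum>X\<in>F. p ^ card X)"
    proof -
      have "(\<Sum>S\<in>Pow V. w S * (if {v} \<subseteq> S then 1 else 0)) = p" if "v \<in> V" for v
        using weight_sub[OF fin, of "{v}" p] that by (simp add: w_def)
      moreover have "(\<Sum>S\<in>Pow V. w S * (if X \<subseteq> S then 1 else 0)) = p ^ card X" if "X \<in> F" for X
        using weight_sub[OF fin, of X p] that F by (auto simp: w_def)
      ultimately show ?thesis by simp
    qed
    finally show ?thesis by simp
  qed
  define M where "M = Max (f ` Pow V)"
  have finP: "finite (f ` Pow V)" using fin by simp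
  have "M \<in> f ` Pow V" unfolding M_def using finP by (intro Max_in) auto
  then obtain S where S: "S \<subseteq> V" "f S = M" by auto
  have "(\<Sum>S\<in>Pow V. w S * f S) \<le> (\<Sum>S\<in>Pow V. w S * M)"
    using finP w0 by (intro sum_mono mult_left_mono) (auto simp: M_def)
  also have "\<dots> = M" using w1 by (simp add: sum_distrib_right[symmetric])
  finally show ?thesis using E S unfolding f_def by metis
qed


lemma removal:
  assumes fin: "finite V" and F: "\<forall>X\<in>F. X \<noteq> {}" and finF: "finite F"
    and loop: "\<forall>v. (v,v) \<notin> E" and SV: "S \<subseteq> V"
    and Fdef: "F = {set cs | cs. is_induced_dcycle E cs}"
  shows "real (alpha_acyclic V E) \<ge> real (card S) - real (card {X\<in>F. X \<subseteq> S})"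
proof -
  define c where "c X = (SOME x. x \<in> X)" for X :: "'a set"
  have c: "c X \<in> X" if "X \<in> F" for X using F that unfolding c_def by (metis some_in_eq ex_in_conv)
  define S' where "S' = S - c ` {X\<in>F. X \<subseteq> S}"
  have fin2: "finite {X\<in>F. X \<subseteq> S}" using finF by simp
  have "card S - card (c ` {X\<in>F. X \<subseteq> S}) \<le> card S'"
    unfolding S'_def by (rule diff_card_le_card_Diff) (use fin2 in simp)
  moreover have "card (c ` {X\<in>F. X \<subseteq> S}) \<le> card {X\<in>F. X \<subseteq> S}"
    using fin2 by (rule card_image_le)
  ultimately have c1: "real (card S) - real (card {X\<in>F. X \<subseteq> S}) \<le> real (card S')" by linarith
  have acyc: "acyclic_set E S'"
    unfolding acyclic_set_def
  proof
    assume "\<exists>cs. is_dcycle E cs \<and> set cs \<subseteq> S'"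
    then obtain cs where cs: "is_dcycle E cs" "set cs \<subseteq> S'" by blast
    obtain cs' where cs': "is_induced_dcycle E cs'" "set cs' \<subseteq> set cs"
      using induced_sub[OF cs(1) loop] by blast
    have XF: "set cs' \<in> F" using cs'(1) Fdef by blast
    have "set cs' \<subseteq> S" using cs' cs S'_def by blast
    then have "c (set cs') \<notin> S'" using XF unfolding S'_def by blast
    moreover have "c (set cs') \<in> S'" using c[OF XF] cs cs' by blast
    ultimately show False by blast
  qed
  have S'V: "S' \<subseteq> V" using SV S'_def by blast
  have "card S' \<in> {card S | S. S \<subseteq> V \<and> acyclic_set E S}" using S'V acyc by blast
  moreover have "finite {card S | S. S \<subseteq> V \<and> acyclic_set E S}"
  proof -
    have "{card S | S. S \<subseteq> V \<and> acyclic_set E S} \<subseteq> card ` Pow V" by blast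
    then show ?thesis using fin by (meson finite_Pow_iff finite_imageI finite_subset)
  qed
  ultimately have "card S' \<le> alpha_acyclic V E" unfolding alpha_acyclic_def by (rule Max_ge[rotated])
  with c1 show ?thesis by linarith
qed

lemma dcycle_in_V:
  assumes "is_dcycle E cs" "E \<subseteq> V \<times> V" shows "set cs \<subseteq> V"
proof
  fix x assume "x \<in> set cs"
  then obtain i where i: "i < length cs" "x = cs ! i" by (metis in_set_conv_nth)
  then have "(x, cs ! ((i+1) mod length cs)) \<in> E" using assms(1) unfolding is_dcycle_def by blast
  then show "x \<in> V" using assms(2) by blast
qed

lemma cycle_edges_sub:
  assumes "is_dcycle E cs" shows "cycle_edges cs \<subseteq> E"
  using assms unfolding is_dcycle_def cycle_edges_def by blast

theorem mainTheorem3: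
  fixes V :: "'a set" and E :: "('a \<times> 'a) set"
  assumes "digraph V E"
    and "has_dcycle E"
    and "num_induced_dcycles E * girth E \<ge> card V"
  shows "real (alpha_acyclic V E) \<ge>
     (real (girth E) - 1) / real (girth E) *
     (real (card V) ^ girth E / (real (num_induced_dcycles E) * real (girth E)))
       powr (1 / (real (girth E) - 1))"
proof -
  have fin: "finite V" and EV: "E \<subseteq> V \<times> V" and loop: "\<forall>v. (v,v) \<notin> E"
    using assms(1) unfolding digraph_def by auto
  obtain cs0 where cs0: "is_dcycle E cs0" using assms(2) unfolding has_dcycle_def by blast
  define g where "g = girth E"
  define t where "t = num_induced_dcycles E"
  define n where "n = card V"
  have ex: "\<exists>k cs. is_dcycle E cs \<and> length cs = k" using cs0 by blast
  have "\<exists>cs. is_dcycle E cs \<and> length cs = g"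
    unfolding g_def girth_def by (rule LeastI_ex) (use cs0 in blast)
  then obtain cg where cg: "is_dcycle E cg" "length cg = g" by blast
  have g2: "g \<ge> 2" using cg unfolding is_dcycle_def by simp
  have gle: "g \<le> length cs" if "is_dcycle E cs" for cs
    unfolding g_def girth_def by (rule Least_le) (use that in blast)
  define F where "F = {set cs | cs. is_induced_dcycle E cs}"
  define Pr where "Pr = {(set cs, cycle_edges cs) | cs. is_induced_dcycle E cs}"
  have t_def': "t = card Pr" unfolding t_def Pr_def num_induced_dcycles_def by simp
  have FV: "F \<subseteq> Pow V" unfolding F_def is_induced_dcycle_def using dcycle_in_V[OF _ EV] by blast
  have finF: "finite F" using FV fin by (meson finite_Pow_iff finite_subset)
  have finE: "finite E" using EV fin by (meson finite_SigmaI finite_subset)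
  have PrS: "Pr \<subseteq> Pow V \<times> Pow E" unfolding Pr_def is_induced_dcycle_def
    using dcycle_in_V[OF _ EV] cycle_edges_sub by blast
  have finPr: "finite Pr" using PrS fin finE by (meson finite_Pow_iff finite_SigmaI finite_subset)
  have "F = fst ` Pr" unfolding F_def Pr_def by force
  then have cardF: "card F \<le> t" unfolding t_def' using finPr card_image_le by blast
  obtain ci where ci: "is_induced_dcycle E ci" using induced_sub[OF cs0 loop] by blast
  have "(set ci, cycle_edges ci) \<in> Pr" unfolding Pr_def using ci by blast
  then have t1: "t \<ge> 1" unfolding t_def' using finPr
    by (metis One_nat_def Suc_leI card_gt_0_iff empty_iff)
  have cardX: "card X \<ge> g" if XF: "X \<in> F" for X
  proof -
    obtain cs where "X = set cs" "is_induced_dcycle E cs" using XF F_def by blast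
    then show ?thesis using gle[of cs] distinct_card[of cs] unfolding is_induced_dcycle_def is_dcycle_def
      by auto
  qed
  have Fne: "\<forall>X\<in>F. X \<noteq> {}" using cardX g2 by fastforce
  have n1: "n \<ge> 1"
  proof -
    have "set cg \<subseteq> V" using dcycle_in_V[OF cg(1) EV] .
    then have "card (set cg) \<le> n" unfolding n_def using fin card_mono by blast
    moreover have "card (set cg) = g" using cg distinct_card unfolding is_dcycle_def by metis
    ultimately show ?thesis using g2 by linarith
  qed
  have tg: "real t * real g \<ge> real n" using assms(3) unfolding t_def g_def n_def
    by (metis of_nat_le_iff of_nat_mult)
  define q where "q = real n / (real t * real g)"
  have q0: "q > 0" unfolding q_def using n1 t1 g2 by simp
  have q1: "q \<le> 1" unfolding q_def using tg n1 t1 g2 by simp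
  have gr: "real g - 1 > 0" using g2 by simp
  define p where "p = q powr (1 / (real g - 1))"
  have p0: "p > 0" unfolding p_def using q0 by simp
  have p1: "p \<le> 1" unfolding p_def using q0 q1 gr by (simp add: powr_le1)
  have gm: "real (g - 1) = real g - 1" using g2 by simp
  have pq: "p ^ (g - 1) = q"
  proof -
    have "p ^ (g - 1) = p powr (real (g-1))" using p0 by (simp add: powr_realpow)
    also have "\<dots> = q powr ((1 / (real g - 1)) * (real g - 1))" unfolding p_def gm powr_powr ..
    also have "\<dots> = q" using gr q0 by simp
    finally show ?thesis .
  qed
  obtain S where S: "S \<subseteq> V" "real (card S) - real (card {X\<in>F. X \<subseteq> S}) \<ge>
            real (card V) * p - (\<Sum>X\<in>F. p ^ card X)"
    using average_exists[OF fin FV, of p] p0 p1 by auto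
  have "(\<Sum>X\<in>F. p ^ card X) \<le> (\<Sum>X\<in>F. p ^ g)"
    using cardX p0 p1 by (intro sum_mono power_decreasing) auto
  also have "\<dots> = real (card F) * p ^ g" by simp
  also have "\<dots> \<le> real t * p ^ g" using cardF p0 by (intro mult_right_mono) auto
  finally have sumle: "(\<Sum>X\<in>F. p ^ card X) \<le> real t * p ^ g" .
  have alpha: "real (alpha_acyclic V E) \<ge> real n * p - real t * p ^ g"
    using removal[OF fin Fne finF loop S(1) F_def] S(2) sumle unfolding n_def by linarith
  have pg: "p ^ g = p * q" using pq g2
    by (metis Suc_diff_1 less_le_trans pos2 power_Suc)
  have key1: "real n * p - real t * p ^ g = (real g - 1) / real g * (real n * p)"
    unfolding pg q_def using t1 g2 by (simp add: field_simps)
  have key2: "real n * p = (real n ^ g / (real t * real g)) powr (1 / (real g - 1))"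
  proof -
    have "real n ^ g / (real t * real g) = real n ^ (g - 1) * q"
      unfolding q_def using g2 by (simp add: power_eq_if field_simps)
    also have "real n ^ (g-1) = real n powr (real g - 1)"
      using n1 gm by (metis of_nat_0_less_iff powr_realpow less_le_trans zero_less_one)
    finally have "(real n ^ g / (real t * real g)) powr (1 / (real g - 1))
        = (real n powr (real g - 1)) powr (1 / (real g - 1)) * p"
      unfolding p_def using n1 q0 by (simp add: powr_mult)
    also have "(real n powr (real g - 1)) powr (1 / (real g - 1)) = real n"
      using gr n1 by (simp add: powr_powr)
    finally show ?thesis by simp
  qed
  show ?thesis using alpha key1 key2 unfolding g_def t_def n_def by simp
qed

end
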